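(* Let $n\ge 2k+1$ and let $S$ be a vertex cut of $K(n,k)$ achieving the toughness of $K(n,k)$, i.e. $\frac{|S|}{c(K(n,k)\setminus S)}=t(K(n,k))$. Then every connected component of $K(n,k)\setminus S$ is either a single vertex, a copy of $K_2$, or is biconnected (2-connected).
   Context: The Kneser graph $K(n,k)$ has as vertices the $k$-element subsets of $[n]=\{1,\dots,n\}$, two vertices being adjacent iff they are disjoint. A vertex cut is a set $S$ of vertices whose removal disconnects the graph; $c(G\setminus S)$ is the number of connected components after deleting $S$; the toughness is $t(G)=\min_S |S|/c(G\setminus S)$ over vertex cuts $S$. *)

theory Defs
  imports Complex_Main
begin

definition induced_rel :: "('a \<Rightarrow> 'a \<Rightarrow> bool) \<Rightarrow> 'a set \<Rightarrow> 'a \<Rightarrow> 'a \<Rightarrow> bool" where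
  "induced_rel E A = (\<lambda>x y. x \<in> A \<and> y \<in> A \<and> E x y)"

definition components :: "('a \<Rightarrow> 'a \<Rightarrow> bool) \<Rightarrow> 'a set \<Rightarrow> 'a set set" where
  "components E V = {C. \<exists>x\<in>V. C = {y\<in>V. (induced_rel E V)\<^sup>*\<^sup>* x y}}"

definition connected_on :: "('a \<Rightarrow> 'a \<Rightarrow> bool) \<Rightarrow> 'a set \<Rightarrow> bool" where
  "connected_on E V = (V \<noteq> {} \<and> (\<forall>x\<in>V. \<forall>y\<in>V. (induced_rel E V)\<^sup>*\<^sup>* x y))"

definition vertex_cut :: "('a \<Rightarrow> 'a \<Rightarrow> bool) \<Rightarrow> 'a set \<Rightarrow> 'a set \<Rightarrow> bool" where
  "vertex_cut E V S = (S \<subseteq> V \<and> card (components E (V - S)) \<ge> 2)"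

definition toughness :: "('a \<Rightarrow> 'a \<Rightarrow> bool) \<Rightarrow> 'a set \<Rightarrow> real" where
  "toughness E V = Inf {real (card S) / real (card (components E (V - S))) | S. vertex_cut E V S}"

definition biconnected :: "('a \<Rightarrow> 'a \<Rightarrow> bool) \<Rightarrow> 'a set \<Rightarrow> bool" where
  "biconnected E C = (card C \<ge> 3 \<and> connected_on E C \<and> (\<forall>v\<in>C. connected_on E (C - {v})))"

definition kneser_vertices :: "nat \<Rightarrow> nat \<Rightarrow> nat set set" where
  "kneser_vertices n k = {A. A \<subseteq> {1..n} \<and> card A = k}"

definition kneser_adj :: "nat set \<Rightarrow> nat set \<Rightarrow> bool" where
  "kneser_adj A B = (A \<inter> B = {})"

end

theory Submission
  imports Defs
begin

definition ed :: "nat set set \<Rightarrow> nat set set \<Rightarrow> nat" where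
  "ed A B = (\<Sum>u\<in>A. \<Sum>v\<in>B. if kneser_adj u v then 1 else 0)"

lemma adj_sym: "kneser_adj A B = kneser_adj B A"
  unfolding kneser_adj_def by blast

lemma ed_sym: "finite A \<Longrightarrow> finite B \<Longrightarrow> ed A B = ed B A"
  unfolding ed_def by (subst sum.swap) (simp add: adj_sym)

lemma ed_un1: "finite A \<Longrightarrow> finite B \<Longrightarrow> A \<inter> B = {} \<Longrightarrow> ed (A \<union> B) C = ed A C + ed B C"
  unfolding ed_def by (rule sum.union_disjoint)

lemma ed_un2: "finite B \<Longrightarrow> finite C \<Longrightarrow> B \<inter> C = {} \<Longrightarrow> ed A (B \<union> C) = ed A B + ed A C"
  unfolding ed_def by (simp add: sum.union_disjoint sum.distrib)

lemma ed_card: "finite B \<Longrightarrow> (\<Sum>v\<in>B. if kneser_adj u v then 1 else 0) = card {v\<in>B. kneser_adj u v}"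
  by (simp add: sum.If_cases Int_def)

lemma ed_alt: "finite B \<Longrightarrow> ed A B = (\<Sum>u\<in>A. card {v\<in>B. kneser_adj u v})"
  unfolding ed_def by (simp add: ed_card)

lemma finite_V: "finite (kneser_vertices n k)"
proof -
  have "kneser_vertices n k \<subseteq> Pow {1..n}" unfolding kneser_vertices_def by auto
  then show ?thesis by (rule finite_subset) simp
qed

lemma V_D: assumes "A \<in> kneser_vertices n k" shows "A \<subseteq> {1..n}" "card A = k" "finite A"
  using assms unfolding kneser_vertices_def by (auto intro: finite_subset)

lemma no_loop: "1 \<le> k \<Longrightarrow> A \<in> kneser_vertices n k \<Longrightarrow> \<not> kneser_adj A A"
  unfolding kneser_adj_def kneser_vertices_def by auto

lemma deg: assumes "A \<in> kneser_vertices n k"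
  shows "card {v\<in>kneser_vertices n k. kneser_adj A v} = (n - k) choose k"
proof -
  have "{v\<in>kneser_vertices n k. kneser_adj A v} = {B. B \<subseteq> {1..n} - A \<and> card B = k}"
    using V_D[OF assms] unfolding kneser_vertices_def kneser_adj_def by auto
  moreover have "card ({1..n} - A) = n - k"
    using V_D[OF assms] by (simp add: card_Diff_subset)
  ultimately show ?thesis by (simp add: n_subsets)
qed

lemma choose_ge: "1 \<le> k \<Longrightarrow> k < m \<Longrightarrow> m \<le> m choose k"
proof (induction m)
  case 0 then show ?case by simp
next
  case (Suc m)
  show ?case
  proof (cases "k < m")
    case True
    then have "m \<le> m choose k" using Suc by simp
    moreover have "0 < m choose (k - 1)" using True by (simp add: zero_less_binomial_iff)
    moreover have "(Suc m) choose k = (m choose (k - 1)) + (m choose k)"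
      using Suc.prems(1) by (metis Suc_diff_1 binomial_Suc_Suc less_le_trans zero_less_one)
    ultimately show ?thesis by linarith
  next
    case False
    then have "k = m" using Suc by simp
    then show ?thesis by simp
  qed
qed

lemma rt_in: "(induced_rel E F)\<^sup>*\<^sup>* x y \<Longrightarrow> x \<in> F \<Longrightarrow> y \<in> F"
  by (induction rule: rtranclp_induct) (auto simp: induced_rel_def)

lemma rt_sym: assumes "\<And>x y. E x y = E y x" "(induced_rel E F)\<^sup>*\<^sup>* x y"
  shows "(induced_rel E F)\<^sup>*\<^sup>* y x"
  using assms(2)
proof (induction rule: rtranclp_induct)
  case base then show ?case by simp
next
  case (step y z)
  have "induced_rel E F z y" using step(2) assms(1) unfolding induced_rel_def by auto
  then show ?case using step(3) by (meson converse_rtranclp_into_rtranclp)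
qed

lemma rt_mono: assumes "C \<subseteq> F" "(induced_rel E C)\<^sup>*\<^sup>* x y" shows "(induced_rel E F)\<^sup>*\<^sup>* x y"
  using assms(2)
proof (induction rule: rtranclp_induct)
  case base then show ?case by simp
next
  case (step y z)
  then have "induced_rel E F y z" using assms(1) unfolding induced_rel_def by auto
  then show ?case using step by (meson rtranclp.rtrancl_into_rtrancl)
qed

lemma rt_closed:
  assumes "C \<subseteq> F" "\<forall>u\<in>C. \<forall>w\<in>F. E u w \<longrightarrow> w \<in> C" "x \<in> C"
    "(induced_rel E F)\<^sup>*\<^sup>* x y"
  shows "(induced_rel E C)\<^sup>*\<^sup>* x y"
  using assms(4)
proof (induction rule: rtranclp_induct)
  case base then show ?case by simp
next
  case (step y z)
  have "y \<in> C" using rt_in[OF step(3) assms(3)] .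
  then have "induced_rel E C y z" using step(2) assms(2) unfolding induced_rel_def by auto
  then show ?case using step by (meson rtranclp.rtrancl_into_rtrancl)
qed

lemma comp_cases: assumes "C \<in> components E F"
  obtains x where "x \<in> F" "C = {y\<in>F. (induced_rel E F)\<^sup>*\<^sup>* x y}"
  using assms unfolding components_def by auto

lemma comp_in: "x \<in> F \<Longrightarrow> {y\<in>F. (induced_rel E F)\<^sup>*\<^sup>* x y} \<in> components E F"
  unfolding components_def by auto

lemma comp_sub: "C \<in> components E F \<Longrightarrow> C \<subseteq> F"
  by (erule comp_cases) auto

lemma comp_ne: "C \<in> components E F \<Longrightarrow> C \<noteq> {}"
  by (erule comp_cases) auto

lemma comp_eq: assumes "\<And>x y. E x y = E y x" "C \<in> components E F" "x \<in> C"
  shows "C = {y\<in>F. (induced_rel E F)\<^sup>*\<^sup>* x y}"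
proof -
  obtain z where z: "z \<in> F" "C = {y\<in>F. (induced_rel E F)\<^sup>*\<^sup>* z y}" using comp_cases[OF assms(2)] by blast
  have zx: "(induced_rel E F)\<^sup>*\<^sup>* z x" using z assms(3) by auto
  have xz: "(induced_rel E F)\<^sup>*\<^sup>* x z" using rt_sym[OF assms(1) zx] .
  show ?thesis using z zx xz by (auto intro: rtranclp_trans)
qed

lemma comp_disj: assumes "\<And>x y. E x y = E y x" "C \<in> components E F" "D \<in> components E F" "x \<in> C" "x \<in> D"
  shows "C = D"
  using comp_eq[OF assms(1,2,4)] comp_eq[OF assms(1,3,5)] by simp

lemma comp_closed: assumes "\<And>x y. E x y = E y x" "C \<in> components E F" "u \<in> C" "w \<in> F" "E u w"
  shows "w \<in> C"
proof -
  have C: "C = {y\<in>F. (induced_rel E F)\<^sup>*\<^sup>* u y}" using comp_eq[OF assms(1-3)] .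
  have "u \<in> F" using assms(3) C by auto
  then have "induced_rel E F u w" using assms(4,5) unfolding induced_rel_def by auto
  then show ?thesis using C assms(4) by auto
qed

lemma comp_Union: "\<Union> (components E F) = F"
proof
  show "\<Union> (components E F) \<subseteq> F" using comp_sub by blast
  show "F \<subseteq> \<Union> (components E F)"
  proof
    fix x assume "x \<in> F"
    then have "x \<in> {y\<in>F. (induced_rel E F)\<^sup>*\<^sup>* x y}" by simp
    then show "x \<in> \<Union> (components E F)" using comp_in[OF \<open>x \<in> F\<close>] by blast
  qed
qed

lemma comp_finite: "finite F \<Longrightarrow> finite (components E F)"
  by (rule finite_subset[of _ "Pow F"]) (auto dest: comp_sub)

lemma comp_connected: assumes "\<And>x y. E x y = E y x" "C \<in> components E F"
  shows "connected_on E C"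
  unfolding connected_on_def
proof (intro conjI ballI)
  show "C \<noteq> {}" using comp_ne[OF assms(2)] .
  fix x y assume xy: "x \<in> C" "y \<in> C"
  have C: "C = {y\<in>F. (induced_rel E F)\<^sup>*\<^sup>* x y}" using comp_eq[OF assms(1,2) xy(1)] .
  have "(induced_rel E F)\<^sup>*\<^sup>* x y" using xy(2) C by auto
  moreover have "\<forall>u\<in>C. \<forall>w\<in>F. E u w \<longrightarrow> w \<in> C" using comp_closed[OF assms(1,2)] by blast
  ultimately show "(induced_rel E C)\<^sup>*\<^sup>* x y" using rt_closed comp_sub[OF assms(2)] xy(1) by metis
qed

lemma kneser_conn_aux:
  assumes n: "2*k+1 \<le> n"
  shows "\<forall>A. A \<in> kneser_vertices n k \<longrightarrow> B \<in> kneser_vertices n k \<longrightarrow> card (A - B) = m \<longrightarrow>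
     (induced_rel kneser_adj (kneser_vertices n k))\<^sup>*\<^sup>* A B"
proof (induction m)
  case 0
  show ?case
  proof (intro allI impI)
    fix A assume A: "A \<in> kneser_vertices n k" and B: "B \<in> kneser_vertices n k" and c: "card (A - B) = 0"
    have "A \<subseteq> B" using c V_D(3)[OF A] by auto
    then have "A = B" using V_D[OF A] V_D[OF B] by (simp add: card_subset_eq)
    then show "(induced_rel kneser_adj (kneser_vertices n k))\<^sup>*\<^sup>* A B" by simp
  qed
next
  case (Suc m)
  show ?case
  proof (intro allI impI)
    fix A assume A: "A \<in> kneser_vertices n k" and B: "B \<in> kneser_vertices n k" and c: "card (A - B) = Suc m"
    obtain x where x: "x \<in> A - B" using c by (metis card.empty ex_in_conv nat.distinct(1))
    have fA: "finite A" "finite B" using V_D A B by auto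
    have "card (B - A) = card (A - B)"
      using fA V_D(2)[OF A] V_D(2)[OF B] by (metis Int_commute card_Diff_subset_Int inf.cobounded1 finite_Int)
    then obtain y where y: "y \<in> B - A" using c by (metis card.empty ex_in_conv nat.distinct(1))
    define A' where "A' = insert y (A - {x})"
    have cpos: "card A > 0" using x fA by (auto simp: card_gt_0_iff)
    have A'V: "A' \<in> kneser_vertices n k"
      using V_D[OF A] V_D[OF B] x y cpos unfolding A'_def kneser_vertices_def
      by (auto simp: card_insert_if)
    have "A' - B = (A - B) - {x}" unfolding A'_def using y by auto
    then have cA': "card (A' - B) = m" using c x fA by simp
    have "card ({1..n} - insert y A) = n - (k+1)"
      using V_D[OF A] V_D[OF B] y by (subst card_Diff_subset) (auto simp: card_insert_if)
    then have "k \<le> card ({1..n} - insert y A)" using n by simp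
    then obtain Z where Z: "Z \<subseteq> {1..n} - insert y A" "card Z = k" by (meson obtain_subset_with_card_n)
    have ZV: "Z \<in> kneser_vertices n k" using Z unfolding kneser_vertices_def by auto
    have r1: "induced_rel kneser_adj (kneser_vertices n k) A Z"
      using A ZV Z unfolding induced_rel_def kneser_adj_def by auto
    have r2: "induced_rel kneser_adj (kneser_vertices n k) Z A'"
      using A'V ZV Z unfolding induced_rel_def kneser_adj_def A'_def by auto
    have "(induced_rel kneser_adj (kneser_vertices n k))\<^sup>*\<^sup>* A' B" using Suc.IH A'V B cA' by blast
    then show "(induced_rel kneser_adj (kneser_vertices n k))\<^sup>*\<^sup>* A B"
      using r1 r2 by (meson converse_rtranclp_into_rtranclp)
  qed
qed

lemma kneser_conn: "2*k+1 \<le> n \<Longrightarrow> A \<in> kneser_vertices n k \<Longrightarrow> B \<in> kneser_vertices n k \<Longrightarrow>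
     (induced_rel kneser_adj (kneser_vertices n k))\<^sup>*\<^sup>* A B"
  using kneser_conn_aux by blast

lemma kneser_trans:
  assumes A: "A \<in> kneser_vertices n k" and B: "B \<in> kneser_vertices n k"
  obtains f where "bij_betw f {1..n} {1..n}" "f ` A = B"
proof -
  have fA: "finite A" "finite B" using V_D A B by auto
  obtain g where g: "bij_betw g A B" using V_D(2)[OF A] V_D(2)[OF B] fA by (metis finite_same_card_bij)
  have "card ({1..n} - A) = card ({1..n} - B)"
    using V_D[OF A] V_D[OF B] by (simp add: card_Diff_subset)
  then obtain h where h: "bij_betw h ({1..n} - A) ({1..n} - B)" by (metis finite_same_card_bij finite_Diff finite_atLeastAtMost)
  define f where "f x = (if x \<in> A then g x else h x)" for x
  have "bij_betw f A B" using g unfolding f_def by (rule bij_betw_cong[THEN iffD1, rotated]) auto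
  moreover have "bij_betw f ({1..n} - A) ({1..n} - B)" using h unfolding f_def by (rule bij_betw_cong[THEN iffD1, rotated]) auto
  ultimately have "bij_betw f (A \<union> ({1..n} - A)) (B \<union> ({1..n} - B))" by (rule bij_betw_combine) auto
  moreover have "A \<union> ({1..n} - A) = {1..n}" "B \<union> ({1..n} - B) = {1..n}" using V_D[OF A] V_D[OF B] by auto
  ultimately have "bij_betw f {1..n} {1..n}" by simp
  moreover have "f ` A = B" using \<open>bij_betw f A B\<close> by (simp add: bij_betw_def)
  ultimately show ?thesis using that by blast
qed

lemma odd_walk:
  assumes k: "1 \<le> k" and n: "2*k+1 \<le> n"
  shows "\<not> (\<forall>x\<in>kneser_vertices n k. \<forall>y\<in>kneser_vertices n k. kneser_adj x y \<longrightarrow> (x \<in> F \<longleftrightarrow> y \<notin> F))"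
proof
  assume H: "\<forall>x\<in>kneser_vertices n k. \<forall>y\<in>kneser_vertices n k. kneser_adj x y \<longrightarrow> (x \<in> F \<longleftrightarrow> y \<notin> F)"
  define T where "T j = {j+1..j+k}" for j :: nat
  define Z where "Z j = {1..2*k+1} - {j+1..j+k+1}" for j :: nat
  have TV: "T j \<in> kneser_vertices n k" if "j \<le> k" for j
    using that n unfolding T_def kneser_vertices_def by auto
  have ZV: "Z j \<in> kneser_vertices n k" if "j \<le> k" for j
  proof -
    have "card (Z j) = (2*k+1) - (k+1)" unfolding Z_def using that by (subst card_Diff_subset) auto
    then show ?thesis using n unfolding Z_def kneser_vertices_def by auto
  qed
  have step: "(T (Suc j) \<in> F) = (T j \<in> F)" if "j < k" for j
  proof -
    have a1: "kneser_adj (T j) (Z j)" unfolding kneser_adj_def T_def Z_def by auto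
    have a2: "kneser_adj (Z j) (T (Suc j))" unfolding kneser_adj_def T_def Z_def by auto
    have "(T j \<in> F) = (Z j \<notin> F)" using H TV ZV a1 that by simp
    moreover have "(Z j \<in> F) = (T (Suc j) \<notin> F)" using H TV ZV a2 that by simp
    ultimately show ?thesis by blast
  qed
  have all: "j \<le> k \<Longrightarrow> (T j \<in> F) = (T 0 \<in> F)" for j
    by (induction j) (use step in auto)
  have "kneser_adj (T 0) (T k)" unfolding kneser_adj_def T_def by auto
  then have "(T 0 \<in> F) = (T k \<notin> F)" using H TV by simp
  then show False using all[of k] by simp
qed

lemma auto_exists:
  assumes u: "u \<in> kneser_vertices n k" and u': "u' \<in> kneser_vertices n k"
  shows "\<exists>f. inj_on f (kneser_vertices n k) \<and> f ` kneser_vertices n k = kneser_vertices n k \<and> f u = u' \<and>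
     (\<forall>A\<in>kneser_vertices n k. \<forall>B\<in>kneser_vertices n k. kneser_adj (f A) (f B) = kneser_adj A B)"
proof -
  obtain \<sigma> where s: "bij_betw \<sigma> {1..n} {1..n}" "\<sigma> ` u = u'" using kneser_trans[OF u u'] by blast
  have inj: "inj_on \<sigma> {1..n}" using s(1) by (simp add: bij_betw_def)
  have im: "\<sigma> ` {1..n} = {1..n}" using s(1) by (simp add: bij_betw_def)
  have mapV: "image \<sigma> A \<in> kneser_vertices n k" if "A \<in> kneser_vertices n k" for A
  proof -
    have A1: "A \<subseteq> {1..n}" "card A = k" using V_D[OF that] by auto
    have "\<sigma> ` A \<subseteq> {1..n}" using A1(1) im by blast
    moreover have "card (\<sigma> ` A) = k" using card_image[OF inj_on_subset[OF inj A1(1)]] A1(2) by simp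
    ultimately show ?thesis unfolding kneser_vertices_def by simp
  qed
  have injV: "inj_on (image \<sigma>) (kneser_vertices n k)"
  proof (rule inj_onI)
    fix A B assume "A \<in> kneser_vertices n k" "B \<in> kneser_vertices n k" "\<sigma> ` A = \<sigma> ` B"
    then show "A = B" using inj_on_image_eq_iff[OF inj V_D(1) V_D(1)] by blast
  qed
  have imV: "image \<sigma> ` kneser_vertices n k = kneser_vertices n k"
  proof (rule card_subset_eq)
    show "finite (kneser_vertices n k)" by (rule finite_V)
    show "image \<sigma> ` kneser_vertices n k \<subseteq> kneser_vertices n k" using mapV by auto
    show "card (image \<sigma> ` kneser_vertices n k) = card (kneser_vertices n k)" using injV by (simp add: card_image)
  qed
  have adj: "kneser_adj (\<sigma> ` A) (\<sigma> ` B) = kneser_adj A B" if "A \<in> kneser_vertices n k" "B \<in> kneser_vertices n k" for A B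
  proof -
    have "\<sigma> ` A \<inter> \<sigma> ` B = \<sigma> ` (A \<inter> B)" using inj V_D(1)[OF that(1)] V_D(1)[OF that(2)]
      by (metis inj_on_image_Int)
    then show ?thesis unfolding kneser_adj_def by simp
  qed
  show ?thesis apply (rule exI[of _ "image \<sigma>"]) using injV imV s(2) adj by blast
qed

lemma auto_props:
  assumes inj: "inj_on f (kneser_vertices n k)" and im: "f ` kneser_vertices n k = kneser_vertices n k"
    and adj: "\<forall>A\<in>kneser_vertices n k. \<forall>B\<in>kneser_vertices n k. kneser_adj (f A) (f B) = kneser_adj A B"
    and Y: "Y \<subseteq> kneser_vertices n k" and u: "u \<in> kneser_vertices n k"
  shows "card (f ` Y) = card Y" "kneser_vertices n k - f ` Y = f ` (kneser_vertices n k - Y)"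
    "{w \<in> kneser_vertices n k - f ` Y. kneser_adj (f u) w} = f ` {w \<in> kneser_vertices n k - Y. kneser_adj u w}"
    "card {w \<in> kneser_vertices n k - f ` Y. kneser_adj (f u) w} = card {w \<in> kneser_vertices n k - Y. kneser_adj u w}"
proof -
  show "card (f ` Y) = card Y" using inj Y by (meson card_image inj_on_subset)
  show D: "kneser_vertices n k - f ` Y = f ` (kneser_vertices n k - Y)"
    using inj_on_image_set_diff[OF inj, of "kneser_vertices n k" Y] im Y by simp
  show E: "{w \<in> kneser_vertices n k - f ` Y. kneser_adj (f u) w} = f ` {w \<in> kneser_vertices n k - Y. kneser_adj u w}"
  proof
    show "{w \<in> kneser_vertices n k - f ` Y. kneser_adj (f u) w} \<subseteq> f ` {w \<in> kneser_vertices n k - Y. kneser_adj u w}"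
    proof
      fix w assume w: "w \<in> {w \<in> kneser_vertices n k - f ` Y. kneser_adj (f u) w}"
      then obtain z where z: "z \<in> kneser_vertices n k - Y" "w = f z" using D by auto
      then show "w \<in> f ` {w \<in> kneser_vertices n k - Y. kneser_adj u w}" using w adj u by auto
    qed
    show "f ` {w \<in> kneser_vertices n k - Y. kneser_adj u w} \<subseteq> {w \<in> kneser_vertices n k - f ` Y. kneser_adj (f u) w}"
      using D adj u by auto
  qed
  show "card {w \<in> kneser_vertices n k - f ` Y. kneser_adj (f u) w} = card {w \<in> kneser_vertices n k - Y. kneser_adj u w}"
    unfolding E using inj by (intro card_image) (auto intro: inj_on_subset)
qed

lemma bd_single:
  assumes "1 \<le> k" "u \<in> kneser_vertices n k"
  shows "ed {u} (kneser_vertices n k - {u}) = (n - k) choose k"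
proof -
  have "{v \<in> kneser_vertices n k - {u}. kneser_adj u v} = {v \<in> kneser_vertices n k. kneser_adj u v}"
    using no_loop[OF assms] by auto
  then show ?thesis using deg[OF assms(2)] finite_V by (simp add: ed_alt)
qed

lemma submod:
  assumes X: "X \<subseteq> kneser_vertices n k" and Y: "Y \<subseteq> kneser_vertices n k"
  shows "ed (X \<inter> Y) (kneser_vertices n k - (X \<inter> Y)) + ed (X \<union> Y) (kneser_vertices n k - (X \<union> Y))
      \<le> ed X (kneser_vertices n k - X) + ed Y (kneser_vertices n k - Y)"
    "ed (X - Y) (kneser_vertices n k - (X - Y)) + ed (Y - X) (kneser_vertices n k - (Y - X))
      \<le> ed X (kneser_vertices n k - X) + ed Y (kneser_vertices n k - Y)"
proof -
  let ?V = "kneser_vertices n k"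
  define a where "a = X \<inter> Y"
  define b where "b = X - Y"
  define c where "c = Y - X"
  define z where "z = ?V - (X \<union> Y)"
  have fin: "finite a" "finite b" "finite c" "finite z"
    unfolding a_def b_def c_def z_def using X Y finite_V by (auto intro: finite_subset)
  have e1: "X = a \<union> b" "?V - X = c \<union> z" "Y = a \<union> c" "?V - Y = b \<union> z"
    "?V - (X \<inter> Y) = (b \<union> c) \<union> z" "X \<union> Y = (a \<union> b) \<union> c" "?V - (X \<union> Y) = z"
    "?V - (X - Y) = (a \<union> c) \<union> z" "?V - (Y - X) = (a \<union> b) \<union> z" "X \<inter> Y = a" "X - Y = b" "Y - X = c"
    unfolding a_def b_def c_def z_def using X Y by auto
  have d: "a \<inter> b = {}" "a \<inter> c = {}" "a \<inter> z = {}" "b \<inter> c = {}" "b \<inter> z = {}" "c \<inter> z = {}"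
    "(a \<union> b) \<inter> c = {}" "(a \<union> b) \<inter> z = {}" "(a \<union> c) \<inter> z = {}" "(b \<union> c) \<inter> z = {}"
    unfolding a_def b_def c_def z_def by auto
  have s: "ed b a = ed a b" "ed c a = ed a c" "ed c b = ed b c"
    using fin ed_sym by auto
  have u1: "ed (P \<union> Q) R = ed P R + ed Q R" if "P \<inter> Q = {}" "finite P" "finite Q" for P Q R
    using ed_un1 that by blast
  have u2: "ed R (P \<union> Q) = ed R P + ed R Q" if "P \<inter> Q = {}" "finite P" "finite Q" for P Q R
    using ed_un2 that by blast
  have bX: "ed X (?V - X) = ed a c + ed a z + ed b c + ed b z"
  proof -
    have "ed X (?V - X) = ed (a \<union> b) (c \<union> z)" using e1(1,2) by metis
    also have "\<dots> = ed a (c \<union> z) + ed b (c \<union> z)" using u1 d fin by blast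
    also have "\<dots> = ed a c + ed a z + ed b c + ed b z" using u2[of c z] d fin by simp
    finally show ?thesis .
  qed
  have bY: "ed Y (?V - Y) = ed a b + ed a z + ed c b + ed c z"
  proof -
    have "ed Y (?V - Y) = ed (a \<union> c) (b \<union> z)" using e1(3,4) by metis
    also have "\<dots> = ed a (b \<union> z) + ed c (b \<union> z)" using u1 d fin by blast
    also have "\<dots> = ed a b + ed a z + ed c b + ed c z" using u2[of b z] d fin by simp
    finally show ?thesis .
  qed
  have bI: "ed (X \<inter> Y) (?V - (X \<inter> Y)) = ed a b + ed a c + ed a z"
  proof -
    have "ed (X \<inter> Y) (?V - (X \<inter> Y)) = ed a ((b \<union> c) \<union> z)" using e1(5,10) by metis
    also have "\<dots> = ed a (b \<union> c) + ed a z" using u2 d fin by blast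
    also have "\<dots> = ed a b + ed a c + ed a z" using u2[of b c] d fin by simp
    finally show ?thesis .
  qed
  have bU: "ed (X \<union> Y) (?V - (X \<union> Y)) = ed a z + ed b z + ed c z"
  proof -
    have "ed (X \<union> Y) (?V - (X \<union> Y)) = ed ((a \<union> b) \<union> c) z" using e1(6,7) by metis
    also have "\<dots> = ed (a \<union> b) z + ed c z" using u1 d fin by blast
    also have "\<dots> = ed a z + ed b z + ed c z" using u1[of a b] d fin by simp
    finally show ?thesis .
  qed
  have bXY: "ed (X - Y) (?V - (X - Y)) = ed b a + ed b c + ed b z"
  proof -
    have "ed (X - Y) (?V - (X - Y)) = ed b ((a \<union> c) \<union> z)" using e1(8,11) by metis
    also have "\<dots> = ed b (a \<union> c) + ed b z" using u2 d fin by blast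
    also have "\<dots> = ed b a + ed b c + ed b z" using u2[of a c] d fin by simp
    finally show ?thesis .
  qed
  have bYX: "ed (Y - X) (?V - (Y - X)) = ed c a + ed c b + ed c z"
  proof -
    have "ed (Y - X) (?V - (Y - X)) = ed c ((a \<union> b) \<union> z)" using e1(9,12) by metis
    also have "\<dots> = ed c (a \<union> b) + ed c z" using u2 d fin by blast
    also have "\<dots> = ed c a + ed c b + ed c z" using u2[of a b] d fin by simp
    finally show ?thesis .
  qed
  show "ed (X \<inter> Y) (?V - (X \<inter> Y)) + ed (X \<union> Y) (?V - (X \<union> Y)) \<le> ed X (?V - X) + ed Y (?V - Y)"
    using bX bY bI bU s by simp
  show "ed (X - Y) (?V - (X - Y)) + ed (Y - X) (?V - (Y - X)) \<le> ed X (?V - X) + ed Y (?V - Y)"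
    using bX bY bXY bYX s by simp
qed

lemma card_ge2: "finite A \<Longrightarrow> A \<noteq> {} \<Longrightarrow> card A \<noteq> 1 \<Longrightarrow> 2 \<le> card A"
  by (metis One_nat_def card_0_eq less_2_cases not_le)

lemma super:
  assumes k: "2 \<le> k" and n: "2*k+1 \<le> n"
    and X: "X \<subseteq> kneser_vertices n k" "2 \<le> card X" "2 \<le> card (kneser_vertices n k - X)"
  shows "(n - k) choose k < ed X (kneser_vertices n k - X)"
proof (rule ccontr)
  let ?V = "kneser_vertices n k"
  define d where "d = (n - k) choose k"
  define bd where "bd Y = ed Y (?V - Y)" for Y
  assume "\<not> (n - k) choose k < ed X (?V - X)"
  then have bX: "bd X \<le> d" unfolding bd_def d_def by simp
  have finV: "finite ?V" by (rule finite_V)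
  have k1: "1 \<le> k" using k by simp
  have dge: "n - k \<le> d" unfolding d_def using choose_ge[of k "n - k"] k n by simp
  have d3: "3 \<le> d" using dge k n by simp
  have dk: "n < d * k"
  proof -
    have "(n - k) * k \<le> d * k" by (rule mult_le_mono1[OF dge])
    moreover have "n < (n - k) * k"
    proof -
      have "n - k \<ge> k + 1" using n by simp
      then obtain r where r: "n - k = k + 1 + r" by (metis le_Suc_ex)
      then have nn: "n = 2*k + 1 + r" using n by simp
      obtain j where j: "k = 2 + j" using k by (metis le_Suc_ex)
      show ?thesis unfolding r nn j by (simp add: algebra_simps)
    qed
    ultimately show ?thesis by linarith
  qed
  have degu: "card {v\<in>?V. kneser_adj u v} = d" if "u \<in> ?V" for u
    unfolding d_def using deg[OF that] .
  define P where "P Y \<longleftrightarrow> Y \<subseteq> ?V \<and> 2 \<le> card Y \<and> 2 \<le> card (?V - Y)" for Y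
  define L where "L = bd ` {Y. P Y}"
  have finL: "finite L" unfolding L_def P_def
    by (rule finite_imageI, rule finite_subset[of _ "Pow ?V"]) (use finV in auto)
  have XL: "bd X \<in> L" unfolding L_def P_def using X by auto
  define lam where "lam = Min L"
  have lam_le: "lam \<le> bd Y" if "P Y" for Y
    unfolding lam_def using finL that L_def by (auto intro: Min_le)
  have lamL: "lam \<in> L" unfolding lam_def using finL XL by (auto intro: Min_in)
  have lamd: "lam \<le> d" using lam_le[of X] bX X P_def by auto
  define M where "M = card ` {Y. P Y \<and> bd Y = lam}"
  have finM: "finite M" unfolding M_def P_def
    by (rule finite_imageI, rule finite_subset[of _ "Pow ?V"]) (use finV in auto)
  have Mne: "M \<noteq> {}" using lamL unfolding M_def L_def by auto
  define a where "a = Min M"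
  obtain X0 where X0: "P X0" "bd X0 = lam" "card X0 = a"
    using Min_in[OF finM Mne] unfolding a_def M_def by auto
  have a_le: "a \<le> card Y" if "P Y" "bd Y = lam" for Y
    unfolding a_def M_def using finM that M_def by (auto intro: Min_le)
  have bd_compl: "bd Y = bd (?V - Y)" if "Y \<subseteq> ?V" for Y
  proof -
    have "?V - (?V - Y) = Y" using that by auto
    moreover have "finite Y" "finite (?V - Y)" using that finV by (auto intro: finite_subset)
    ultimately show ?thesis unfolding bd_def using ed_sym by metis
  qed
  have lower: "lam \<le> bd Z" if Z: "Z \<subseteq> ?V" "Z \<noteq> {}" "Z \<noteq> ?V" for Z
  proof -
    have fZ: "finite Z" "finite (?V - Z)" using Z finV by (auto intro: finite_subset)
    show ?thesis
    proof (cases "card Z = 1")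
      case True
      then obtain u where "Z = {u}" by (meson card_1_singletonE)
      then have "bd Z = d" unfolding bd_def d_def using bd_single[OF k1] Z by auto
      then show ?thesis using lamd by simp
    next
      case False
      show ?thesis
      proof (cases "card (?V - Z) = 1")
        case True
        then obtain u where u: "?V - Z = {u}" by (meson card_1_singletonE)
        then have "Z = ?V - {u}" using Z by auto
        then have "bd (?V - Z) = d" unfolding bd_def d_def using bd_single[OF k1] u by auto
        then show ?thesis using lamd bd_compl[OF Z(1)] by simp
      next
        case False2: False
        have "?V - Z \<noteq> {}" using Z by auto
        then have "P Z" unfolding P_def using Z fZ False False2 card_ge2 by auto
        then show ?thesis by (rule lam_le)
      qed
    qed
  qed
  have nb: "card {w\<in>?V - {v}. kneser_adj u w} \<ge> d - 1" if "u \<in> ?V" for u v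
  proof -
    have "{w\<in>?V - {v}. kneser_adj u w} = {w\<in>?V. kneser_adj u w} - {v}" by auto
    then show ?thesis using degu[OF that] finV by (simp add: card_Diff_singleton_if)
  qed
  have a3: "3 \<le> a"
  proof (rule ccontr)
    assume "\<not> 3 \<le> a"
    then have "card X0 = 2" using X0 P_def by simp
    then obtain u v where uv: "X0 = {u, v}" "u \<noteq> v" by (meson card_2_iff)
    have uV: "u \<in> ?V" "v \<in> ?V" using X0(1) uv P_def by auto
    have "{w\<in>?V - {u,v}. kneser_adj u w} = {w\<in>?V - {v}. kneser_adj u w}" using no_loop[OF k1 uV(1)] by auto
    moreover have "{w\<in>?V - {u,v}. kneser_adj v w} = {w\<in>?V - {u}. kneser_adj v w}" using no_loop[OF k1 uV(2)] by auto
    moreover have "bd X0 = card {w\<in>?V - {u,v}. kneser_adj u w} + card {w\<in>?V - {u,v}. kneser_adj v w}"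
      unfolding bd_def uv using finV uv(2) by (simp add: ed_alt)
    ultimately have "bd X0 \<ge> 2 * (d - 1)" using nb[OF uV(1), of v] nb[OF uV(2), of u] by simp
    then show False using X0(2) lamd d3 by simp
  qed
  have fin_sub: "finite Y" if "Y \<subseteq> ?V" for Y using that finV by (auto intro: finite_subset)
  have disj: "Y1 = Y2" if Y1: "P Y1" "bd Y1 = lam" "card Y1 = a" and Y2: "P Y2" "bd Y2 = lam" "card Y2 = a"
    and int: "Y1 \<inter> Y2 \<noteq> {}" for Y1 Y2
  proof (rule ccontr)
    assume ne: "Y1 \<noteq> Y2"
    have s1: "Y1 \<subseteq> ?V" "Y2 \<subseteq> ?V" using Y1 Y2 P_def by auto
    have f1: "finite Y1" "finite Y2" using s1 fin_sub by auto
    have d12: "Y1 - Y2 \<noteq> {}"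
    proof
      assume "Y1 - Y2 = {}"
      then have "Y1 \<subseteq> Y2" by auto
      then have "Y1 = Y2" using f1 Y1(3) Y2(3) by (simp add: card_subset_eq)
      then show False using ne by simp
    qed
    have d21: "Y2 - Y1 \<noteq> {}"
    proof
      assume "Y2 - Y1 = {}"
      then have "Y2 \<subseteq> Y1" by auto
      then have "Y2 = Y1" using f1 Y1(3) Y2(3) by (simp add: card_subset_eq)
      then have "Y1 = Y2" by simp
      then show False using ne by simp
    qed
    have Y2ne: "Y2 \<noteq> {}" "Y1 \<noteq> {}" using Y1 Y2 P_def by auto
    have l1: "lam \<le> bd (Y1 - Y2)" using lower[of "Y1 - Y2"] s1 d12 Y2ne by auto
    have l2: "lam \<le> bd (Y2 - Y1)" using lower[of "Y2 - Y1"] s1 d21 Y2ne by auto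
    have sm2: "bd (Y1 - Y2) + bd (Y2 - Y1) \<le> bd Y1 + bd Y2" unfolding bd_def using submod(2)[OF s1] .
    have e1: "bd (Y1 - Y2) = lam" using l1 l2 sm2 Y1(2) Y2(2) by simp
    have c12: "card (Y1 - Y2) = 1"
    proof (rule ccontr)
      assume "card (Y1 - Y2) \<noteq> 1"
      then have c2: "2 \<le> card (Y1 - Y2)" using card_ge2 d12 f1 by auto
      have "Y2 \<subseteq> ?V - (Y1 - Y2)" using s1 by auto
      then have "card Y2 \<le> card (?V - (Y1 - Y2))" using finV by (simp add: card_mono)
      then have "P (Y1 - Y2)" unfolding P_def using c2 s1 Y2(1) P_def by auto
      then have "a \<le> card (Y1 - Y2)" using a_le e1 by blast
      moreover have "card (Y1 - Y2) < card Y1" using int f1 by (metis Diff_Diff_Int Diff_subset card_seteq inf_commute not_le psubsetI psubset_card_mono subset_Diff_insert Diff_eq_empty_iff)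
      ultimately show False using Y1(3) by simp
    qed
    have cI: "card (Y1 \<inter> Y2) = a - 1"
      using c12 Y1(3) f1 by (metis card_Diff_subset_Int Diff_Diff_Int Int_lower1 diff_diff_cancel card_mono finite_Int le_refl)
    have UV: "Y1 \<union> Y2 \<noteq> ?V"
    proof
      assume U: "Y1 \<union> Y2 = ?V"
      then have "?V - Y1 = Y2 - Y1" by auto
      moreover have "card (Y2 - Y1) = 1"
        using c12 Y1(3) Y2(3) f1 by (metis card_Diff_subset_Int Int_lower1 Int_lower2 Int_commute finite_Int)
      ultimately show False using Y1(1) P_def by simp
    qed
    have "?V - Y1 \<noteq> {}" using Y1(1) unfolding P_def by (metis card.empty not_numeral_le_zero)
    then have "Y1 \<inter> Y2 \<noteq> ?V" by auto
    then have l3: "lam \<le> bd (Y1 \<inter> Y2)" using lower[of "Y1 \<inter> Y2"] s1 int by auto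
    have l4: "lam \<le> bd (Y1 \<union> Y2)" using lower[of "Y1 \<union> Y2"] s1 UV Y2ne by auto
    have sm1: "bd (Y1 \<inter> Y2) + bd (Y1 \<union> Y2) \<le> bd Y1 + bd Y2" unfolding bd_def using submod(1)[OF s1] .
    have e2: "bd (Y1 \<inter> Y2) = lam" using l3 l4 sm1 Y1(2) Y2(2) by simp
    have "?V - Y1 \<subseteq> ?V - (Y1 \<inter> Y2)" by auto
    then have "card (?V - Y1) \<le> card (?V - (Y1 \<inter> Y2))" using finV by (simp add: card_mono)
    then have "P (Y1 \<inter> Y2)" unfolding P_def using cI a3 s1 Y1(1) P_def by auto
    then have "a \<le> a - 1" using a_le e2 cI by metis
    then show False using a3 by simp
  qed
  have X0V: "X0 \<subseteq> ?V" using X0(1) P_def by auto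
  have finX0: "finite X0" using fin_sub[OF X0V] .
  have "X0 \<noteq> {}" using X0(1) unfolding P_def by (metis card.empty not_numeral_le_zero)
  then obtain u0 where u0: "u0 \<in> X0" by blast
  define out where "out u = card {w\<in>?V - X0. kneser_adj u w}" for u
  define oo where "oo = out u0"
  have unif: "out u = oo" if u: "u \<in> X0" for u
  proof -
    obtain f where f: "inj_on f ?V" "f ` ?V = ?V" "f u0 = u"
      "\<forall>A\<in>?V. \<forall>B\<in>?V. kneser_adj (f A) (f B) = kneser_adj A B"
      using auto_exists[OF subsetD[OF X0V u0] subsetD[OF X0V u]] by (elim exE conjE) blast
    note ap = auto_props[OF f(1) f(2) f(4) X0V]
    have fX0V: "f ` X0 \<subseteq> ?V" using X0V f(2) by auto
    have injX0: "inj_on f X0" using f(1) X0V by (rule inj_on_subset)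
    have "bd (f ` X0) = (\<Sum>x\<in>f ` X0. card {w\<in>?V - f ` X0. kneser_adj x w})"
      unfolding bd_def using finV by (simp add: ed_alt)
    also have "\<dots> = (\<Sum>y\<in>X0. card {w\<in>?V - f ` X0. kneser_adj (f y) w})"
      using injX0 by (simp add: sum.reindex)
    also have "\<dots> = (\<Sum>y\<in>X0. card {w\<in>?V - X0. kneser_adj y w})"
    proof (rule sum.cong[OF refl])
      fix y assume "y \<in> X0"
      then show "card {w\<in>?V - f ` X0. kneser_adj (f y) w} = card {w\<in>?V - X0. kneser_adj y w}"
        using ap(4)[of y] X0V by blast
    qed
    also have "\<dots> = bd X0" unfolding bd_def using finV by (simp add: ed_alt)
    finally have bf: "bd (f ` X0) = lam" using X0(2) by simp
    have u0V: "u0 \<in> ?V" using X0V u0 by blast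
    have cf: "card (f ` X0) = a" using ap(1)[OF u0V] X0(3) by simp
    have "card (f ` (?V - X0)) = card (?V - X0)"
      using card_image[OF inj_on_subset[OF f(1) Diff_subset]] .
    then have "card (?V - f ` X0) = card (?V - X0)" using ap(2)[OF u0V] by simp
    then have Pf: "P (f ` X0)" unfolding P_def using fX0V cf X0(1,3) P_def by auto
    have "u \<in> f ` X0 \<inter> X0" using u u0 f(3) by auto
    then have fX: "f ` X0 = X0" using disj[OF Pf bf cf X0] by blast
    have "out u = card {w\<in>?V - f ` X0. kneser_adj (f u0) w}" unfolding out_def fX f(3) ..
    also have "\<dots> = out u0" unfolding out_def using ap(4)[OF u0V] .
    finally show ?thesis unfolding oo_def .
  qed
  have bdX0: "bd X0 = a * oo"
  proof -
    have "bd X0 = (\<Sum>u\<in>X0. out u)" unfolding bd_def out_def using finV by (simp add: ed_alt)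
    also have "\<dots> = (\<Sum>u\<in>X0. oo)" using unif by (intro sum.cong) auto
    finally show ?thesis using X0(3) by simp
  qed
  have inner: "card {w\<in>X0. kneser_adj u w} + out u = d" if u: "u \<in> X0" for u
  proof -
    have "{w\<in>?V. kneser_adj u w} = {w\<in>X0. kneser_adj u w} \<union> {w\<in>?V - X0. kneser_adj u w}" using X0V by auto
    moreover have "finite {w\<in>X0. kneser_adj u w}" "finite {w\<in>?V - X0. kneser_adj u w}" using finX0 finV by auto
    ultimately have "card {w\<in>?V. kneser_adj u w} = card {w\<in>X0. kneser_adj u w} + out u"
      unfolding out_def by (simp add: card_Un_disjoint disjoint_iff)
    then show ?thesis using degu u X0V by auto
  qed
  have innle: "card {w\<in>X0. kneser_adj u w} \<le> a - 1" if u: "u \<in> X0" for u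
  proof -
    have "{w\<in>X0. kneser_adj u w} \<subseteq> X0 - {u}" using no_loop[OF k1] u X0V by auto
    then have "card {w\<in>X0. kneser_adj u w} \<le> card (X0 - {u})" using finX0 by (simp add: card_mono)
    then show ?thesis using u X0(3) finX0 by simp
  qed
  have ao: "a * oo \<le> d" using bdX0 X0(2) lamd by simp
  have od: "d - oo \<le> a - 1" using inner[OF u0] innle[OF u0] unif[OF u0] by simp
  have o_le: "oo \<le> d" using inner[OF u0] unif[OF u0] by simp
  show False
  proof (cases "oo = 0")
    case True
    then have cl: "\<forall>u\<in>X0. \<forall>w\<in>?V. kneser_adj u w \<longrightarrow> w \<in> X0"
    proof (intro ballI impI)
      fix u w assume u: "u \<in> X0" and w: "w \<in> ?V" and adj: "kneser_adj u w"
      have "out u = 0" using unif[OF u] True by simp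
      then have "{w\<in>?V - X0. kneser_adj u w} = {}" unfolding out_def using finV by simp
      then show "w \<in> X0" using w adj by auto
    qed
    have "?V - X0 \<noteq> {}" using X0(1) unfolding P_def by (metis card.empty not_numeral_le_zero)
    then obtain w where w: "w \<in> ?V" "w \<notin> X0" by blast
    have "(induced_rel kneser_adj ?V)\<^sup>*\<^sup>* u0 w" using kneser_conn[OF n] u0 X0V w by auto
    then have "(induced_rel kneser_adj X0)\<^sup>*\<^sup>* u0 w" using rt_closed[OF X0V cl u0] by blast
    then have "w \<in> X0" using rt_in u0 by metis
    then show False using w by simp
  next
    case False
    show False
    proof (cases "oo = 1")
      case True
      have ad: "a = d" using ao od True a3 by simp
      have pw: "kneser_adj u w" if "u \<in> X0" "w \<in> X0" "u \<noteq> w" for u w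
      proof -
        have "card {w\<in>X0. kneser_adj u w} = card (X0 - {u})"
          using inner[OF that(1)] unif[OF that(1)] True ad X0(3) finX0 that(1) by simp
        moreover have "{w\<in>X0. kneser_adj u w} \<subseteq> X0 - {u}" using no_loop[OF k1] that(1) X0V by auto
        ultimately have "{w\<in>X0. kneser_adj u w} = X0 - {u}" using finX0 by (simp add: card_subset_eq)
        then show ?thesis using that by auto
      qed
      have "pairwise disjnt X0"
        unfolding pairwise_def disjnt_def using pw unfolding kneser_adj_def by blast
      moreover have "\<forall>A\<in>X0. finite A" using X0V V_D by blast
      ultimately have "card (\<Union>X0) = sum card X0" using card_Union_disjoint by blast
      also have "\<dots> = (\<Sum>A\<in>X0. k)" using X0V V_D(2) by (intro sum.cong) auto
      also have "\<dots> = a * k" using X0(3) by simp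
      finally have cU: "card (\<Union>X0) = d * k" using ad by simp
      have "\<Union>X0 \<subseteq> {1..n}" using X0V V_D(1) by blast
      then have "card (\<Union>X0) \<le> n" by (metis card_atLeastAtMost card_mono diff_Suc_1 finite_atLeastAtMost)
      then show False using cU dk by simp
    next
      case False2: False
      have o2: "2 \<le> oo" using False False2 by simp
      obtain r where r: "d = oo + r" using o_le by (metis le_Suc_ex)
      have ar: "r + 1 \<le> a" using od r a3 by simp
      have h1: "(r + 1) * oo \<le> a * oo" using ar by (rule mult_le_mono1)
      have h2: "(r + 1) * oo = r * oo + oo" by (simp add: algebra_simps)
      have h3: "r * 2 \<le> r * oo" using o2 by simp
      have "r = 0" using h1 h2 h3 ao r by linarith
      then have "a * oo \<le> oo" using ao r by simp
      then have "a \<le> 1" using o2 by simp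
      then show False using a3 by simp
    qed
  qed
qed

lemma split_count:
  assumes sym: "\<And>x y. E x y = E y x" and finF: "finite F"
    and C0: "C0 \<in> components E F" and v: "v \<in> C0"
    and x: "x \<in> C0 - {v}" and y: "y \<in> C0 - {v}"
    and nxy: "\<not> (induced_rel E (C0 - {v}))\<^sup>*\<^sup>* x y"
  shows "card (components E F) + 1 \<le> card (components E (F - {v}))"
proof -
  define F' where "F' = F - {v}"
  have C0F: "C0 \<subseteq> F" using comp_sub[OF C0] .
  have old: "D \<in> components E F'" if D: "D \<in> components E F" "D \<noteq> C0" for D
  proof -
    obtain z where z: "z \<in> D" using comp_ne[OF D(1)] by blast
    have Deq: "D = {y\<in>F. (induced_rel E F)\<^sup>*\<^sup>* z y}" using comp_eq[OF sym D(1) z] .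
    have vD: "v \<notin> D" using comp_disj[OF sym C0 D(1) v] D(2) by auto
    have DF: "D \<subseteq> F" using comp_sub[OF D(1)] .
    have DF': "D \<subseteq> F'" using DF vD unfolding F'_def by auto
    have cl: "\<forall>u\<in>D. \<forall>w\<in>F. E u w \<longrightarrow> w \<in> D" using comp_closed[OF sym D(1)] by blast
    have "D = {y\<in>F'. (induced_rel E F')\<^sup>*\<^sup>* z y}"
    proof
      show "D \<subseteq> {y\<in>F'. (induced_rel E F')\<^sup>*\<^sup>* z y}"
      proof
        fix w assume w: "w \<in> D"
        then have "(induced_rel E F)\<^sup>*\<^sup>* z w" using Deq by auto
        then have "(induced_rel E D)\<^sup>*\<^sup>* z w" using rt_closed[OF DF cl z] by blast
        then have "(induced_rel E F')\<^sup>*\<^sup>* z w" using rt_mono[OF DF'] by blast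
        then show "w \<in> {y\<in>F'. (induced_rel E F')\<^sup>*\<^sup>* z y}" using w DF' by auto
      qed
      show "{y\<in>F'. (induced_rel E F')\<^sup>*\<^sup>* z y} \<subseteq> D"
      proof
        fix w assume "w \<in> {y\<in>F'. (induced_rel E F')\<^sup>*\<^sup>* z y}"
        then have "w \<in> F" "(induced_rel E F)\<^sup>*\<^sup>* z w" using rt_mono[of F' F] unfolding F'_def by auto
        then show "w \<in> D" using Deq by auto
      qed
    qed
    moreover have "z \<in> F'" using z DF' by auto
    ultimately show ?thesis using comp_in by metis
  qed
  define Cx where "Cx = {w\<in>F'. (induced_rel E F')\<^sup>*\<^sup>* x w}"
  define Cy where "Cy = {w\<in>F'. (induced_rel E F')\<^sup>*\<^sup>* y w}"
  have xF': "x \<in> F'" "y \<in> F'" using x y C0F unfolding F'_def by auto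
  have Cxc: "Cx \<in> components E F'" "Cy \<in> components E F'" unfolding Cx_def Cy_def using comp_in[OF xF'(1)] comp_in[OF xF'(2)] by auto
  have xCx: "x \<in> Cx" "y \<in> Cy" unfolding Cx_def Cy_def using xF' by auto
  have C0x: "C0 = {w\<in>F. (induced_rel E F)\<^sup>*\<^sup>* x w}" using comp_eq[OF sym C0] x by auto
  have ne: "Cx \<noteq> Cy"
  proof
    assume "Cx = Cy"
    then have "y \<in> Cx" using xCx by simp
    then have r: "(induced_rel E F')\<^sup>*\<^sup>* x y" unfolding Cx_def by auto
    have sub: "C0 - {v} \<subseteq> F'" using C0F unfolding F'_def by auto
    have cl: "\<forall>u\<in>C0 - {v}. \<forall>w\<in>F'. E u w \<longrightarrow> w \<in> C0 - {v}"
      using comp_closed[OF sym C0] unfolding F'_def by blast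
    have "(induced_rel E (C0 - {v}))\<^sup>*\<^sup>* x y" using rt_closed[OF sub cl x r] .
    then show False using nxy by simp
  qed
  have notold: "Cx \<notin> components E F - {C0}" "Cy \<notin> components E F - {C0}"
  proof -
    show "Cx \<notin> components E F - {C0}"
    proof
      assume "Cx \<in> components E F - {C0}"
      then show False using comp_disj[OF sym C0, of Cx x] x xCx by auto
    qed
    show "Cy \<notin> components E F - {C0}"
    proof
      assume "Cy \<in> components E F - {C0}"
      then show False using comp_disj[OF sym C0, of Cy y] y xCx by auto
    qed
  qed
  have sub: "(components E F - {C0}) \<union> {Cx, Cy} \<subseteq> components E F'" using old Cxc by auto
  have finc: "finite (components E F)" using comp_finite[OF finF] .
  have finc': "finite (components E F')" using comp_finite finF unfolding F'_def by auto
  have "card ((components E F - {C0}) \<union> {Cx, Cy}) = card (components E F - {C0}) + card {Cx, Cy}"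
    using finc notold by (intro card_Un_disjoint) auto
  also have "\<dots> = card (components E F) - 1 + 2" using finc C0 ne by simp
  also have "\<dots> = card (components E F) + 1" using finc C0 by (simp add: card_gt_0_iff) (metis card_gt_0_iff empty_iff Suc_pred)
  finally have "card (components E F) + 1 = card ((components E F - {C0}) \<union> {Cx, Cy})" by simp
  also have "\<dots> \<le> card (components E F')" using card_mono[OF finc' sub] .
  finally show ?thesis unfolding F'_def .
qed

lemma cut_big:
  assumes k: "2 \<le> k" and n: "2*k+1 \<le> n"
    and cut: "vertex_cut kneser_adj (kneser_vertices n k) S"
  shows "card (components kneser_adj (kneser_vertices n k - S)) < card S"
proof (rule ccontr)
  let ?V = "kneser_vertices n k"
  define F where "F = ?V - S"
  define cs where "cs = components kneser_adj F"
  define d where "d = (n - k) choose k"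
  assume "\<not> card (components kneser_adj (kneser_vertices n k - S)) < card S"
  then have sc: "card S \<le> card cs" unfolding cs_def F_def by simp
  have SV: "S \<subseteq> ?V" and c2: "2 \<le> card cs" using cut unfolding vertex_cut_def cs_def F_def by auto
  have finV: "finite ?V" by (rule finite_V)
  have finS: "finite S" "finite F" using SV finV unfolding F_def by (auto intro: finite_subset)
  have sym: "\<And>x y. kneser_adj x y = kneser_adj y x" by (rule adj_sym)
  have k1: "1 \<le> k" using k by simp
  have finc: "finite cs" unfolding cs_def using comp_finite[OF finS(2)] .
  have degu: "card {v\<in>?V. kneser_adj u v} = d" if "u \<in> ?V" for u
    unfolding d_def using deg[OF that] .
  have dpos: "0 < d" unfolding d_def using n by simp
  have Sne: "S \<noteq> {}"
  proof
    assume "S = {}"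
    then have FV: "F = ?V" unfolding F_def by simp
    have "cs \<subseteq> {?V}"
    proof
      fix C assume C: "C \<in> cs"
      have C': "C \<in> components kneser_adj F" using C unfolding cs_def .
      obtain x where x: "x \<in> F" "C = {y\<in>F. (induced_rel kneser_adj F)\<^sup>*\<^sup>* x y}"
        using comp_cases[OF C'] by blast
      have "C = ?V" using x FV kneser_conn[OF n] by auto
      then show "C \<in> {?V}" by simp
    qed
    then have "card cs \<le> card {?V}" by (intro card_mono) auto
    then have "card cs \<le> 1" by simp
    then show False using c2 by simp
  qed
  have CF: "C \<subseteq> F" "C \<noteq> {}" "finite C" if "C \<in> cs" for C
  proof -
    have C: "C \<in> components kneser_adj F" using that unfolding cs_def .
    show "C \<subseteq> F" using comp_sub[OF C] .
    show "C \<noteq> {}" using comp_ne[OF C] .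
    show "finite C" using comp_sub[OF C] finS(2) by (rule finite_subset)
  qed
  have cl: "w \<in> C" if "C \<in> cs" "u \<in> C" "w \<in> F" "kneser_adj u w" for C u w
  proof -
    have C: "C \<in> components kneser_adj F" using that(1) unfolding cs_def .
    show ?thesis using comp_closed[where E=kneser_adj, OF adj_sym C that(2-4)] .
  qed
  have cdisj: "C = D" if "C \<in> cs" "D \<in> cs" "x \<in> C" "x \<in> D" for C D x
  proof -
    have "C \<in> components kneser_adj F" "D \<in> components kneser_adj F" using that(1,2) unfolding cs_def by auto
    then show ?thesis using comp_disj[where E=kneser_adj, OF adj_sym _ _ that(3,4)] by blast
  qed
  have eCS: "ed C S = ed C (?V - C)" if C: "C \<in> cs" for C
  proof -
    have "?V - C = S \<union> (F - C)" using CF[OF C] SV unfolding F_def by auto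
    moreover have "ed C (F - C) = 0"
    proof -
      have "ed C (F - C) = (\<Sum>u\<in>C. card {v\<in>F - C. kneser_adj u v})" using finS by (simp add: ed_alt)
      also have "\<dots> = 0"
      proof (rule sum.neutral, rule ballI)
        fix u assume u: "u \<in> C"
        have e: "{v\<in>F - C. kneser_adj u v} = {}" using cl[OF C u] by auto
        show "card {v\<in>F - C. kneser_adj u v} = 0" unfolding e by simp
      qed
      finally show ?thesis .
    qed
    moreover have "ed C (S \<union> (F - C)) = ed C S + ed C (F - C)"
      by (rule ed_un2) (use finS in \<open>auto simp: F_def\<close>)
    ultimately show ?thesis by simp
  qed
  have geC: "d \<le> ed C S" "2 \<le> card C \<Longrightarrow> d < ed C S" if C: "C \<in> cs" for C
  proof -
    have CV: "C \<subseteq> ?V" using CF[OF C] unfolding F_def by auto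
    show g2: "d < ed C S" if c: "2 \<le> card C"
    proof -
      have "card (cs - {C}) \<noteq> 0" using c2 finc C by simp
      then have "cs - {C} \<noteq> {}" by (metis card.empty)
      then obtain C' where C': "C' \<in> cs" "C' \<noteq> C" by blast
      obtain w where w: "w \<in> C'" using CF[OF C'(1)] by blast
      have wC: "w \<notin> C" using cdisj[OF C C'(1) _ w] C'(2) by auto
      obtain X where X: "X \<in> S" using Sne by blast
      have "w \<in> F" using CF[OF C'(1)] w by auto
      then have "{w, X} \<subseteq> ?V - C" "w \<noteq> X" using X wC SV CF[OF C] unfolding F_def by auto
      moreover have "card {w, X} = 2" using \<open>w \<noteq> X\<close> by simp
      ultimately have "2 \<le> card (?V - C)" using finV by (metis card_mono finite_Diff)
      then show ?thesis using super[OF k n CV c] eCS[OF C] unfolding d_def by simp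
    qed
    show "d \<le> ed C S"
    proof (cases "card C = 1")
      case True
      then obtain u where u: "C = {u}" by (meson card_1_singletonE)
      then have "ed C (?V - C) = d" unfolding d_def using bd_single[OF k1] CV by auto
      then show ?thesis using eCS[OF C] by simp
    next
      case False
      then have "2 \<le> card C" using CF[OF C] card_ge2 by auto
      then show ?thesis using g2 by simp
    qed
  qed
  have sumF: "ed F S = (\<Sum>C\<in>cs. ed C S)"
  proof -
    have "\<Union>cs = F" unfolding cs_def by (rule comp_Union)
    moreover have "\<forall>A\<in>cs. \<forall>B\<in>cs. A \<noteq> B \<longrightarrow> A \<inter> B = {}" using cdisj by blast
    moreover have "\<forall>C\<in>cs. finite C" using CF by blast
    ultimately have "(\<Sum>u\<in>\<Union>cs. \<Sum>v\<in>S. if kneser_adj u v then 1 else 0) = (\<Sum>C\<in>cs. \<Sum>u\<in>C. \<Sum>v\<in>S. if kneser_adj u v then 1 else 0)"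
      using sum.Union_disjoint[of cs "\<lambda>u. \<Sum>v\<in>S. if kneser_adj u v then 1 else 0"] by (simp add: comp_def)
    then show ?thesis unfolding ed_def using \<open>\<Union>cs = F\<close> by simp
  qed
  have eSF: "ed F S = (\<Sum>X\<in>S. card {v\<in>F. kneser_adj X v})"
    using ed_sym[OF finS(2) finS(1)] finS by (simp add: ed_alt)
  have leX: "card {v\<in>F. kneser_adj X v} \<le> d" if "X \<in> S" for X
  proof -
    have "{v\<in>F. kneser_adj X v} \<subseteq> {v\<in>?V. kneser_adj X v}" unfolding F_def by auto
    then have "card {v\<in>F. kneser_adj X v} \<le> card {v\<in>?V. kneser_adj X v}" by (rule card_mono[rotated]) (use finV in auto)
    moreover have "X \<in> ?V" using that SV by auto
    ultimately show ?thesis using degu by simp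
  qed
  have up: "ed F S \<le> card S * d"
  proof -
    have "ed F S \<le> (\<Sum>X\<in>S. d)" unfolding eSF by (rule sum_mono) (use leX in auto)
    then show ?thesis by simp
  qed
  have lo: "card cs * d \<le> ed F S"
  proof -
    have "(\<Sum>C\<in>cs. d) \<le> (\<Sum>C\<in>cs. ed C S)" by (rule sum_mono) (use geC in auto)
    then show ?thesis using sumF by simp
  qed
  have all1: "card C = 1" if C: "C \<in> cs" for C
  proof (rule ccontr)
    assume "card C \<noteq> 1"
    then have "2 \<le> card C" using CF[OF C] card_ge2 by auto
    then have "(\<Sum>C\<in>cs. d) < (\<Sum>C\<in>cs. ed C S)"
      using geC C finc by (intro sum_strict_mono_ex1) auto
    moreover have "(\<Sum>C\<in>cs. d) = card cs * d" by simp
    ultimately have "card cs * d < card S * d" using sumF up by linarith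
    then show False using mult_le_mono1[OF sc, of d] by linarith
  qed
  have allS: "{v\<in>?V. kneser_adj X v} \<subseteq> F" if X: "X \<in> S" for X
  proof -
    have eq: "card {v\<in>F. kneser_adj X v} = d"
    proof (rule ccontr)
      assume "card {v\<in>F. kneser_adj X v} \<noteq> d"
      then have "card {v\<in>F. kneser_adj X v} < d" using leX[OF X] by simp
      then have "(\<Sum>X\<in>S. card {v\<in>F. kneser_adj X v}) < (\<Sum>X\<in>S. d)"
        using leX X finS by (intro sum_strict_mono_ex1) auto
      moreover have "(\<Sum>X\<in>S. d) = card S * d" by simp
      ultimately have "card cs * d < card S * d" using lo eSF by linarith
      then show False using mult_le_mono1[OF sc, of d] by linarith
    qed
    have "{v\<in>F. kneser_adj X v} \<subseteq> {v\<in>?V. kneser_adj X v}" unfolding F_def by auto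
    moreover have "card {v\<in>F. kneser_adj X v} = card {v\<in>?V. kneser_adj X v}" using eq degu[of X] X SV by auto
    ultimately have "{v\<in>F. kneser_adj X v} = {v\<in>?V. kneser_adj X v}" using finV by (simp add: card_subset_eq)
    then show ?thesis by auto
  qed
  have bip: "\<forall>x\<in>?V. \<forall>y\<in>?V. kneser_adj x y \<longrightarrow> (x \<in> F \<longleftrightarrow> y \<notin> F)"
  proof (intro ballI impI)
    fix x y assume x: "x \<in> ?V" and y: "y \<in> ?V" and a: "kneser_adj x y"
    show "x \<in> F \<longleftrightarrow> y \<notin> F"
    proof (cases "x \<in> F")
      case True
      have "\<Union>cs = F" unfolding cs_def by (rule comp_Union)
      then obtain C where C: "C \<in> cs" "x \<in> C" using True by blast
      have "y \<notin> F"
      proof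
        assume "y \<in> F"
        then have "y \<in> C" using cl[OF C(1) C(2) _ a] by simp
        moreover obtain u where "C = {u}" using all1[OF C(1)] by (meson card_1_singletonE)
        ultimately have "y = x" using C(2) by simp
        then show False using no_loop[OF k1 x] a by simp
      qed
      then show ?thesis using True by simp
    next
      case False
      then have "x \<in> S" using x unfolding F_def by simp
      then have "y \<in> F" using allS y a by auto
      then show ?thesis using False by simp
    qed
  qed
  then show False using odd_walk[OF k1 n] by blast
qed

lemma small_k:
  assumes k: "k \<le> 1"
  shows "card (components kneser_adj (kneser_vertices n k - S)) \<le> 1"
proof -
  define F where "F = kneser_vertices n k - S"
  have adj: "x = y \<or> kneser_adj x y" if "x \<in> F" "y \<in> F" for x y
  proof -
    have xV: "x \<in> kneser_vertices n k" "y \<in> kneser_vertices n k" using that unfolding F_def by auto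
    show ?thesis
    proof (cases "k = 0")
      case True
      then have "x = {}" "y = {}" using V_D[OF xV(1)] V_D[OF xV(2)] by auto
      then show ?thesis by simp
    next
      case False
      then have k1: "k = 1" using k by simp
      obtain a where a: "x = {a}" using V_D(2)[OF xV(1)] k1 by (meson card_1_singletonE)
      obtain b where b: "y = {b}" using V_D(2)[OF xV(2)] k1 by (meson card_1_singletonE)
      show ?thesis using a b unfolding kneser_adj_def by auto
    qed
  qed
  have "components kneser_adj F \<subseteq> {F}"
  proof
    fix C assume C: "C \<in> components kneser_adj F"
    obtain x where x: "x \<in> F" "C = {y\<in>F. (induced_rel kneser_adj F)\<^sup>*\<^sup>* x y}" using comp_cases[OF C] by blast
    have "(induced_rel kneser_adj F)\<^sup>*\<^sup>* x y" if y: "y \<in> F" for y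
    proof (cases "x = y")
      case True then show ?thesis by simp
    next
      case False
      then have "induced_rel kneser_adj F x y" using adj[OF x(1) y] x(1) y unfolding induced_rel_def by auto
      then show ?thesis by simp
    qed
    then have "C = F" using x by auto
    then show "C \<in> {F}" by simp
  qed
  then have "card (components kneser_adj F) \<le> card {F}" by (intro card_mono) auto
  then show ?thesis unfolding F_def by simp
qed

theorem lemma2p14:
  fixes n k :: nat and S :: "nat set set"
  assumes "n \<ge> 2 * k + 1"
    and "vertex_cut kneser_adj (kneser_vertices n k) S"
    and "real (card S) / real (card (components kneser_adj (kneser_vertices n k - S)))
           = toughness kneser_adj (kneser_vertices n k)"
  shows "\<forall>C \<in> components kneser_adj (kneser_vertices n k - S).
           card C = 1
         \<or> (card C = 2 \<and> connected_on kneser_adj C)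
         \<or> biconnected kneser_adj C"
proof (rule ballI, rule ccontr)
  let ?V = "kneser_vertices n k"
  define F where "F = ?V - S"
  define cs where "cs = components kneser_adj F"
  have n: "2*k+1 \<le> n" using assms(1) by simp
  have cut: "vertex_cut kneser_adj ?V S" by (rule assms(2))
  have SV: "S \<subseteq> ?V" and c2: "2 \<le> card cs" using cut unfolding vertex_cut_def cs_def F_def by auto
  have k2: "2 \<le> k"
  proof (rule ccontr)
    assume "\<not> 2 \<le> k"
    then have "card cs \<le> 1" using small_k[of k n S] unfolding cs_def F_def by simp
    then show False using c2 by simp
  qed
  have big: "card cs < card S" using cut_big[OF k2 n cut] unfolding cs_def F_def .
  have finV: "finite ?V" by (rule finite_V)
  have finF: "finite F" "finite S" using finV SV unfolding F_def by (auto intro: finite_subset)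
  fix C assume C0: "C \<in> components kneser_adj (?V - S)"
  have C: "C \<in> components kneser_adj F" using C0 unfolding F_def .
  assume neg: "\<not> (card C = 1 \<or> (card C = 2 \<and> connected_on kneser_adj C) \<or> biconnected kneser_adj C)"
  have conn: "connected_on kneser_adj C" using comp_connected[where E=kneser_adj, OF adj_sym C] .
  have CF: "C \<subseteq> F" using comp_sub[OF C] .
  have finC: "finite C" using CF finF by (auto intro: finite_subset)
  have Cne: "C \<noteq> {}" using comp_ne[OF C] .
  have c3: "3 \<le> card C" using neg conn finC Cne
    by (metis card_0_eq less_2_cases not_le numeral_2_eq_2 numeral_3_eq_3 One_nat_def less_Suc_eq)
  have nb: "\<not> biconnected kneser_adj C" using neg by simp
  then obtain v where v: "v \<in> C" "\<not> connected_on kneser_adj (C - {v})"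
    unfolding biconnected_def using c3 conn by auto
  have "C - {v} \<noteq> {}"
  proof
    assume "C - {v} = {}"
    then have "C \<subseteq> {v}" by auto
    then have "card C \<le> 1" using card_mono[of "{v}" C] by simp
    then show False using c3 by simp
  qed
  then obtain x y where xy: "x \<in> C - {v}" "y \<in> C - {v}" "\<not> (induced_rel kneser_adj (C - {v}))\<^sup>*\<^sup>* x y"
    using v(2) unfolding connected_on_def by auto
  have cnt: "card cs + 1 \<le> card (components kneser_adj (F - {v}))"
    unfolding cs_def using split_count[where E=kneser_adj, OF adj_sym finF(1) C v(1) xy] .
  define S' where "S' = insert v S"
  have vS: "v \<notin> S" using v(1) CF unfolding F_def by auto
  have VS': "?V - S' = F - {v}" unfolding S'_def F_def by auto
  have cS': "card S' = card S + 1" unfolding S'_def using vS finF by simp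
  have cut': "vertex_cut kneser_adj ?V S'"
    unfolding vertex_cut_def VS' using cnt c2 SV v(1) CF unfolding S'_def F_def by auto
  define T where "T = {real (card S) / real (card (components kneser_adj (?V - S))) | S. vertex_cut kneser_adj ?V S}"
  have mem: "real (card S') / real (card (components kneser_adj (?V - S'))) \<in> T" unfolding T_def using cut' by blast
  have bdd: "bdd_below T" unfolding T_def by (rule bdd_belowI[of _ 0]) auto
  have "toughness kneser_adj ?V \<le> real (card S') / real (card (components kneser_adj (?V - S')))"
    unfolding toughness_def T_def[symmetric] using cInf_lower[OF mem bdd] .
  then have t1: "real (card S) / real (card cs) \<le> real (card S + 1) / real (card (components kneser_adj (F - {v})))"
    using assms(3) unfolding cs_def F_def VS' cS' by (simp add: VS'[unfolded F_def] cS')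
  have t2: "real (card S + 1) / real (card (components kneser_adj (F - {v}))) \<le> real (card S + 1) / real (card cs + 1)"
    using cnt by (intro divide_left_mono) auto
  have t3: "real (card S) / real (card cs) \<le> real (card S + 1) / real (card cs + 1)" using t1 t2 by linarith
  have cpos: "0 < real (card cs)" using c2 by simp
  have "real (card S) * real (card cs + 1) \<le> real (card S + 1) * real (card cs)"
    using t3 cpos by (simp add: field_simps)
  then have "real (card S) \<le> real (card cs)" by (simp add: algebra_simps)
  then show False using big by simp
qed

end
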